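(* Assume the Framework and the Purification Postulate. For every system $\mathrm A$ and every pair of pure states $\psi,\psi'\in\mathfrak S_1(\mathrm A)$ there is a reversible channel $\mathcal U\in\mathbf G_{\mathrm A}$ such that $\psi'=\mathcal U\psi$.
   Context: Framework. We work in an operational-probabilistic theory: there is a collection of systems $\mathrm A,\mathrm B,\dots$, closed under a composition $\mathrm A\mathrm B$ (associative, symmetric up to a reversible swap, with a trivial system $\mathrm I$ satisfying $\mathrm A\mathrm I=\mathrm A$); for each pair of systems a set $\mathfrak T(\mathrm A,\mathrm B)$ of transformations; a test from $\mathrm A$ to $\mathrm B$ is a finite collection $\{\mathcal C_i\}_{i\in X}\subseteq\mathfrak T(\mathrm A,\mathrm B)$, and every transformation belongs to some test. Tests are closed under sequential composition, parallel composition ($\otimes$), coarse-graining (summing outcomes over the blocks of a partition of $X$) and conditioning (choosing the next test depending on the outcome of the previous one). States of $\mathrm A$ are the elements of $\mathfrak S(\mathrm A):=\mathfrak T(\mathrm I,\mathrm A)$, effects are the elements of $\mathfrak T(\mathrm A,\mathrm I)$, and transformations $\mathrm I\to\mathrm I$ are probabilities in $[0,1]$ (those of a test sum to $1$; composition is multiplication). An effect $a$ and a state $\rho$ give the probability $(a|\rho)$. States (effects) are identified when they give equal probabilities on all effects (states); transformations $\mathcal C,\mathcal C'$ are identified when $\mathcal C\otimes\mathcal I_{\mathrm S}$ and $\mathcal C'\otimes\mathcal I_{\mathrm S}$ act identically on all states of $\mathrm A\mathrm S$ for every system $\mathrm S$. States span a finite-dimensional real vector space $\mathfrak S_{\mathbb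 R}(\mathrm A)$, transformations act linearly, and $\mathfrak T_{\mathbb R}(\mathrm A,\mathrm B)$ is the real span of $\mathfrak T(\mathrm A,\mathrm B)$. Standing assumptions: (i) causality: each system $\mathrm A$ has a unique deterministic effect $e_{\mathrm A}$ (the effect forming a one-outcome observation test), and $e_{\mathrm A\mathrm B}=e_{\mathrm A}\otimes e_{\mathrm B}$; (ii) local discriminability: if two states of $\mathrm A\mathrm B$ differ, some product effect $a\otimes b$ gives them different probabilities; (iii) all sets of states are closed, the theory is not deterministic (hence all sets of states, effects and transformations are convex), and perfectly distinguishable states exist. A state $\rho$ is normalized if $(e|\rho)=1$; $\mathfrak S_1(\mathrm A)$ is the set of normalized states. A channel is a $\mathcal C\in\mathfrak T(\mathrm A,\mathrm B)$ with $e_{\mathrm B}\circ\mathcal C=e_{\mathrm A}$. A channel $\mathcal U\in\mathfrak T(\mathrm A,\mathrm B)$ is reversible if some channel $\mathcal W\in\mathfrak T(\mathrm B,\mathrm A)$ satisfies $\mathcal W\mathcal U=\mathcal I_{\mathrm A}$, $\mathcal U\mathcal W=\mathcal I_{\mathrm B}$; $\mathbf G_{\mathrm A}$ is the group of reversible channels on $\mathrm A$. The marginal of a state $\sigma$ of $\mathrm A\mathrm B$ on $\mathrm A$ is $(\mathcal I_{\mathrm A}\otimes e_{\mathrm B})\sigma$. Refinement. For $\mathcal C\in\mathfrak T(\mathrm A,\mathrm B)$, write $\mathcal D\prec\mathcal C$ if there are a test $\{\mathcal D_j\}_{j\in Y}$ and $Y_0\subseteq Y$ with $\mathcal C=\sum_{j\in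 Y_0}\mathcal D_j$ and $\mathcal D\in\{\mathcal D_j\}_{j\in Y_0}$; the refinement set is $D_{\mathcal C}=\{\mathcal D:\mathcal D\prec\mathcal C\}$. $\mathcal C$ is atomic if $\mathcal D\prec\mathcal C$ implies $\mathcal D=\lambda\mathcal C$ for some $\lambda\in[0,1]$. A pure state is an atomic state; a state is mixed otherwise. Purification Postulate. For every $\rho\in\mathfrak S_1(\mathrm A)$ there are a system $\mathrm B$ and a pure $\Psi\in\mathfrak S_1(\mathrm A\mathrm B)$ with $(\mathcal I_{\mathrm A}\otimes e_{\mathrm B})\Psi=\rho$ (a purification of $\rho$, with purifying system $\mathrm B$); and if $\Psi,\Psi'\in\mathfrak S_1(\mathrm A\mathrm B)$ are purifications of the same state, then $\Psi'=(\mathcal I_{\mathrm A}\otimes\mathcal U)\Psi$ for some $\mathcal U\in\mathbf G_{\mathrm B}$. *)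

theory Defs
  imports "HOL-Analysis.Analysis"
begin

text \<open>
  Systems have type 's; all transformations
  (of all input/output pairs) live in one real vector space 't (the direct sum of the spaces
  spanned by the transformations of each pair of systems), so that coarse-graining is vector
  addition.  Equality of 't is the operational identification of transformations.
  Tests are finite collections of transformations, indexed by list positions.
\<close>

record ('s, 't) opt =
  o_cmp   :: "'s \<Rightarrow> 's \<Rightarrow> 's"
  o_triv  :: "'s"
  o_tr    :: "'s \<Rightarrow> 's \<Rightarrow> 't set"
  o_tests :: "'s \<Rightarrow> 's \<Rightarrow> 't list set"
  o_seq   :: "'t \<Rightarrow> 't \<Rightarrow> 't"      \<comment> \<open>o_seq C D = C after D\<close>
  o_par   :: "'t \<Rightarrow> 't \<Rightarrow> 't"
  o_id    :: "'s \<Rightarrow> 't"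
  o_swap  :: "'s \<Rightarrow> 's \<Rightarrow> 't"
  o_prob  :: "'t \<Rightarrow> real"

definition states :: "('s, 't::real_normed_vector) opt \<Rightarrow> 's \<Rightarrow> 't set" where
  "states T A = o_tr T (o_triv T) A"

definition effects :: "('s, 't::real_normed_vector) opt \<Rightarrow> 's \<Rightarrow> 't set" where
  "effects T A = o_tr T A (o_triv T)"

definition pairing :: "('s, 't::real_normed_vector) opt \<Rightarrow> 't \<Rightarrow> 't \<Rightarrow> real" where
  "pairing T a \<rho> = o_prob T (o_seq T a \<rho>)"

definition det_eff :: "('s, 't::real_normed_vector) opt \<Rightarrow> 's \<Rightarrow> 't" where
  "det_eff T A = (THE e. [e] \<in> o_tests T A (o_triv T))"

definition normalized :: "('s, 't::real_normed_vector) opt \<Rightarrow> 's \<Rightarrow> 't \<Rightarrow> bool" where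
  "normalized T A \<rho> \<longleftrightarrow> \<rho> \<in> states T A \<and> pairing T (det_eff T A) \<rho> = 1"

definition channel :: "('s, 't::real_normed_vector) opt \<Rightarrow> 's \<Rightarrow> 's \<Rightarrow> 't \<Rightarrow> bool" where
  "channel T A B C \<longleftrightarrow> C \<in> o_tr T A B \<and> o_seq T (det_eff T B) C = det_eff T A"

definition reversible :: "('s, 't::real_normed_vector) opt \<Rightarrow> 's \<Rightarrow> 's \<Rightarrow> 't \<Rightarrow> bool" where
  "reversible T A B U \<longleftrightarrow> channel T A B U \<and>
     (\<exists>W. channel T B A W \<and> o_seq T W U = o_id T A \<and> o_seq T U W = o_id T B)"

definition revG :: "('s, 't::real_normed_vector) opt \<Rightarrow> 's \<Rightarrow> 't set" where
  "revG T A = {U. reversible T A A U}"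

definition refines :: "('s, 't::real_normed_vector) opt \<Rightarrow> 's \<Rightarrow> 's \<Rightarrow> 't \<Rightarrow> 't \<Rightarrow> bool" where
  "refines T A B D C \<longleftrightarrow>
     (\<exists>ts \<in> o_tests T A B. \<exists>Y0 \<subseteq> {..<length ts}.
        C = (\<Sum>j\<in>Y0. ts ! j) \<and> D \<in> (\<lambda>j. ts ! j) ` Y0)"

definition atomic :: "('s, 't::real_normed_vector) opt \<Rightarrow> 's \<Rightarrow> 's \<Rightarrow> 't \<Rightarrow> bool" where
  "atomic T A B C \<longleftrightarrow> C \<in> o_tr T A B \<and>
     (\<forall>D. refines T A B D C \<longrightarrow> (\<exists>c\<in>{0..1}. D = c *\<^sub>R C))"

definition pure_state :: "('s, 't::real_normed_vector) opt \<Rightarrow> 's \<Rightarrow> 't \<Rightarrow> bool" where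
  "pure_state T A \<psi> \<longleftrightarrow> atomic T (o_triv T) A \<psi>"

text \<open>Marginal on A of a state of AB: (I_A \<otimes> e_B) sigma (a state of AI = A).\<close>
definition marginal :: "('s, 't::real_normed_vector) opt \<Rightarrow> 's \<Rightarrow> 's \<Rightarrow> 't \<Rightarrow> 't" where
  "marginal T A B \<sigma> = o_seq T (o_par T (o_id T A) (det_eff T B)) \<sigma>"

definition purification ::
  "('s, 't::real_normed_vector) opt \<Rightarrow> 's \<Rightarrow> 's \<Rightarrow> 't \<Rightarrow> 't \<Rightarrow> bool" where
  "purification T A B \<rho> \<Psi> \<longleftrightarrow>
     normalized T (o_cmp T A B) \<Psi> \<and> pure_state T (o_cmp T A B) \<Psi> \<and> marginal T A B \<Psi> = \<rho>"

definition purification_postulate :: "('s, 't::real_normed_vector) opt \<Rightarrow> bool" where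
  "purification_postulate T \<longleftrightarrow>
     (\<forall>A \<rho>. normalized T A \<rho> \<longrightarrow> (\<exists>B \<Psi>. purification T A B \<rho> \<Psi>)) \<and>
     (\<forall>A B \<rho> \<Psi> \<Psi>'. purification T A B \<rho> \<Psi> \<and> purification T A B \<rho> \<Psi>' \<longrightarrow>
        (\<exists>U \<in> revG T B. \<Psi>' = o_seq T (o_par T (o_id T A) U) \<Psi>))"

definition systems_ax :: "('s, 't::real_normed_vector) opt \<Rightarrow> bool" where
  "systems_ax T \<longleftrightarrow>
     (\<forall>A B C. o_cmp T (o_cmp T A B) C = o_cmp T A (o_cmp T B C)) \<and>
     (\<forall>A. o_cmp T A (o_triv T) = A)"

definition category_ax :: "('s, 't::real_normed_vector) opt \<Rightarrow> bool" where
  "category_ax T \<longleftrightarrow>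
     (\<forall>A. o_id T A \<in> o_tr T A A) \<and>
     (\<forall>A B C. C \<in> o_tr T A B \<longrightarrow> o_seq T C (o_id T A) = C \<and> o_seq T (o_id T B) C = C) \<and>
     (\<forall>A B C C' D. C \<in> o_tr T B C' \<longrightarrow> D \<in> o_tr T A B \<longrightarrow> o_seq T C D \<in> o_tr T A C') \<and>
     (\<forall>x y z. o_seq T (o_seq T x y) z = o_seq T x (o_seq T y z)) \<and>
     (\<forall>A A' B B' C D. C \<in> o_tr T A B \<longrightarrow> D \<in> o_tr T A' B' \<longrightarrow>
        o_par T C D \<in> o_tr T (o_cmp T A A') (o_cmp T B B')) \<and>
     (\<forall>A B B2 A' B' B2' C C' D D'. C' \<in> o_tr T A B \<longrightarrow> C \<in> o_tr T B B2 \<longrightarrow>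
        D' \<in> o_tr T A' B' \<longrightarrow> D \<in> o_tr T B' B2' \<longrightarrow>
        o_par T (o_seq T C C') (o_seq T D D') = o_seq T (o_par T C D) (o_par T C' D')) \<and>
     (\<forall>A B. o_par T (o_id T A) (o_id T B) = o_id T (o_cmp T A B)) \<and>
     (\<forall>x y z. o_par T (o_par T x y) z = o_par T x (o_par T y z)) \<and>
     (\<forall>a. linear (o_seq T a)) \<and> (\<forall>b. linear (\<lambda>a. o_seq T a b)) \<and>
     (\<forall>a. linear (o_par T a)) \<and> (\<forall>b. linear (\<lambda>a. o_par T a b))"

definition swap_ax :: "('s, 't::real_normed_vector) opt \<Rightarrow> bool" where
  "swap_ax T \<longleftrightarrow>
     (\<forall>A B. reversible T (o_cmp T A B) (o_cmp T B A) (o_swap T A B)) \<and>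
     (\<forall>A B. o_seq T (o_swap T B A) (o_swap T A B) = o_id T (o_cmp T A B)) \<and>
     (\<forall>A A' B B' C D. C \<in> o_tr T A B \<longrightarrow> D \<in> o_tr T A' B' \<longrightarrow>
        o_seq T (o_swap T B B') (o_par T C D) = o_seq T (o_par T D C) (o_swap T A A'))"

definition prob_ax :: "('s, 't::real_normed_vector) opt \<Rightarrow> bool" where
  "prob_ax T \<longleftrightarrow>
     inj_on (o_prob T) (o_tr T (o_triv T) (o_triv T)) \<and>
     o_prob T ` o_tr T (o_triv T) (o_triv T) \<subseteq> {0..1} \<and>
     linear (o_prob T) \<and>
     (\<forall>p \<in> o_tr T (o_triv T) (o_triv T). \<forall>q \<in> o_tr T (o_triv T) (o_triv T).
        o_prob T (o_seq T p q) = o_prob T p * o_prob T q) \<and>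
     (\<forall>A B C. \<forall>p \<in> o_tr T (o_triv T) (o_triv T). C \<in> o_tr T A B \<longrightarrow>
        o_par T C p = o_prob T p *\<^sub>R C) \<and>
     (\<forall>ts \<in> o_tests T (o_triv T) (o_triv T). (\<Sum>t\<leftarrow>ts. o_prob T t) = 1)"

definition tests_ax :: "('s, 't::real_normed_vector) opt \<Rightarrow> bool" where
  "tests_ax T \<longleftrightarrow>
     (\<forall>A B ts. ts \<in> o_tests T A B \<longrightarrow> ts \<noteq> [] \<and> set ts \<subseteq> o_tr T A B) \<and>
     (\<forall>A B C. C \<in> o_tr T A B \<longrightarrow> (\<exists>ts \<in> o_tests T A B. C \<in> set ts)) \<and>
     (\<forall>A. [o_id T A] \<in> o_tests T A A) \<and>
     \<comment> \<open>sequential composition with conditioning (plain sequential composition is the case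
         of a constant choice f)\<close>
     (\<forall>A B C us f. us \<in> o_tests T A B \<longrightarrow> (\<forall>i<length us. f i \<in> o_tests T B C) \<longrightarrow>
        concat (map (\<lambda>i. map (\<lambda>t. o_seq T t (us ! i)) (f i)) [0..<length us]) \<in> o_tests T A C) \<and>
     \<comment> \<open>parallel composition\<close>
     (\<forall>A B A' B' ts us. ts \<in> o_tests T A B \<longrightarrow> us \<in> o_tests T A' B' \<longrightarrow>
        [o_par T t u. t \<leftarrow> ts, u \<leftarrow> us] \<in> o_tests T (o_cmp T A A') (o_cmp T B B')) \<and>
     \<comment> \<open>coarse-graining over a partition into m nonempty blocks g^-1(k), k < m
         (bijective g gives reindexing)\<close>
     (\<forall>A B ts (g :: nat \<Rightarrow> nat) m. ts \<in> o_tests T A B \<longrightarrow> g ` {..<length ts} = {..<m} \<longrightarrow>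
        map (\<lambda>k. \<Sum>j \<in> {j. j < length ts \<and> g j = k}. ts ! j) [0..<m] \<in> o_tests T A B)"

definition identification_ax :: "('s, 't::real_normed_vector) opt \<Rightarrow> bool" where
  "identification_ax T \<longleftrightarrow>
     (\<forall>A. \<forall>\<rho> \<in> states T A. \<forall>\<sigma> \<in> states T A.
        (\<forall>a \<in> effects T A. pairing T a \<rho> = pairing T a \<sigma>) \<longrightarrow> \<rho> = \<sigma>) \<and>
     (\<forall>A. \<forall>a \<in> effects T A. \<forall>b \<in> effects T A.
        (\<forall>\<rho> \<in> states T A. pairing T a \<rho> = pairing T b \<rho>) \<longrightarrow> a = b) \<and>
     (\<forall>A B. \<forall>C \<in> o_tr T A B. \<forall>C' \<in> o_tr T A B.
        (\<forall>S. \<forall>\<rho> \<in> states T (o_cmp T A S).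
           o_seq T (o_par T C (o_id T S)) \<rho> = o_seq T (o_par T C' (o_id T S)) \<rho>) \<longrightarrow> C = C')"

definition finite_dim_ax :: "('s, 't::real_normed_vector) opt \<Rightarrow> bool" where
  "finite_dim_ax T \<longleftrightarrow> (\<forall>A. \<exists>F. finite F \<and> span (states T A) = span F)"

definition causality_ax :: "('s, 't::real_normed_vector) opt \<Rightarrow> bool" where
  "causality_ax T \<longleftrightarrow>
     (\<forall>A. \<exists>!e. [e] \<in> o_tests T A (o_triv T)) \<and>
     (\<forall>A B. det_eff T (o_cmp T A B) = o_par T (det_eff T A) (det_eff T B))"

definition local_discr_ax :: "('s, 't::real_normed_vector) opt \<Rightarrow> bool" where
  "local_discr_ax T \<longleftrightarrow>
     (\<forall>A B. \<forall>\<rho> \<in> states T (o_cmp T A B). \<forall>\<sigma> \<in> states T (o_cmp T A B). \<rho> \<noteq> \<sigma> \<longrightarrow>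
        (\<exists>a \<in> effects T A. \<exists>b \<in> effects T B.
           pairing T (o_par T a b) \<rho> \<noteq> pairing T (o_par T a b) \<sigma>))"

definition regularity_ax :: "('s, 't::real_normed_vector) opt \<Rightarrow> bool" where
  "regularity_ax T \<longleftrightarrow>
     (\<forall>A. closed (states T A)) \<and>
     (\<exists>p \<in> o_tr T (o_triv T) (o_triv T). 0 < o_prob T p \<and> o_prob T p < 1) \<and>
     (\<forall>A B. convex (o_tr T A B)) \<and>
     (\<exists>A \<rho>1 \<rho>2 a1 a2. normalized T A \<rho>1 \<and> normalized T A \<rho>2 \<and>
        [a1, a2] \<in> o_tests T A (o_triv T) \<and>
        pairing T a1 \<rho>1 = 1 \<and> pairing T a2 \<rho>1 = 0 \<and>
        pairing T a1 \<rho>2 = 0 \<and> pairing T a2 \<rho>2 = 1)"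

definition opt_framework :: "('s, 't::real_normed_vector) opt \<Rightarrow> bool" where
  "opt_framework T \<longleftrightarrow> systems_ax T \<and> category_ax T \<and> swap_ax T \<and> prob_ax T \<and>
     tests_ax T \<and> identification_ax T \<and> finite_dim_ax T \<and> causality_ax T \<and>
     local_discr_ax T \<and> regularity_ax T"

end

theory Submission
  imports Defs
begin
lemma idx_bound: fixes i n k m :: nat assumes "i < n" "k < m" shows "i * m + k < n * m"
proof -
  have "i * m + k < i * m + m" using assms by simp
  also have "\<dots> = Suc i * m" by simp
  also have "\<dots> \<le> n * m" using assms(1) by (intro mult_le_mono1) simp
  finally show ?thesis .
qed
lemma concat_len: "length (concat (map (\<lambda>i. map (g i) ws) [0..<n])) = n * length ws"
  by (induction n) auto
lemma concat_nth_blocks: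
  assumes "i < n" "k < length ws"
  shows "concat (map (\<lambda>i. map (g i) ws) [0..<n]) ! (i * length ws + k) = g i (ws ! k)"
  using assms
proof (induction n arbitrary: i)
  case 0 then show ?case by simp
next
  case (Suc n)
    show ?case
    proof (cases "i < n")
      case True
      then have "i * length ws + k < n * length ws"
        using Suc by (intro idx_bound)
      then show ?thesis using Suc.IH[OF True Suc(3)] concat_len[of g ws n] by (simp add: nth_append)
    next
      case False
      then have "i = n" using Suc by simp
      then show ?thesis using concat_len[of g ws n] Suc by (simp add: nth_append)
    qed
qed
lemma cat_facts:
  assumes "category_ax T"
  shows cat_id: "o_id T A \<in> o_tr T A A"
    and cat_idr: "C1 \<in> o_tr T A1 B1 \<Longrightarrow> o_seq T C1 (o_id T A1) = C1"
    and cat_idl: "C2 \<in> o_tr T A2 B2 \<Longrightarrow> o_seq T (o_id T B2) C2 = C2"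
    and cat_seq: "C3 \<in> o_tr T B3 S3 \<Longrightarrow> D3 \<in> o_tr T A3 B3 \<Longrightarrow> o_seq T C3 D3 \<in> o_tr T A3 S3"
    and cat_assoc: "o_seq T (o_seq T x y) z = o_seq T x (o_seq T y z)"
    and cat_par: "C4 \<in> o_tr T A4 B4 \<Longrightarrow> D4 \<in> o_tr T A4' B4' \<Longrightarrow> o_par T C4 D4 \<in> o_tr T (o_cmp T A4 A4') (o_cmp T B4 B4')"
    and cat_interchange: "C5' \<in> o_tr T A5 B5 \<Longrightarrow> C5 \<in> o_tr T B5 B52 \<Longrightarrow> D5' \<in> o_tr T A5' B5' \<Longrightarrow> D5 \<in> o_tr T B5' B52' \<Longrightarrow>
        o_par T (o_seq T C5 C5') (o_seq T D5 D5') = o_seq T (o_par T C5 D5) (o_par T C5' D5')"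
    and cat_parid: "o_par T (o_id T A6) (o_id T B6) = o_id T (o_cmp T A6 B6)"
    and cat_lin: "linear (o_seq T a)"
    and cat_linr: "linear (\<lambda>a. o_seq T a b)"
  using assms unfolding category_ax_def by simp_all

lemma tests_facts:
  assumes "tests_ax T"
  shows tst_ne: "ts \<in> o_tests T A B \<Longrightarrow> ts \<noteq> []"
    and tst_tr: "ts1 \<in> o_tests T A1 B1 \<Longrightarrow> set ts1 \<subseteq> o_tr T A1 B1"
    and tst_ex: "C \<in> o_tr T A2 B2 \<Longrightarrow> \<exists>ts \<in> o_tests T A2 B2. C \<in> set ts"
    and tst_id: "[o_id T A3] \<in> o_tests T A3 A3"
    and tst_seq: "us \<in> o_tests T A4 B4 \<Longrightarrow> (\<forall>i<length us. f i \<in> o_tests T B4 C4) \<Longrightarrow>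
        concat (map (\<lambda>i. map (\<lambda>t. o_seq T t (us ! i)) (f i)) [0..<length us]) \<in> o_tests T A4 C4"
  using assms unfolding tests_ax_def by simp_all

lemma pure_transport:
  fixes T :: "('s, 't::real_normed_vector) opt"
  assumes cat: "category_ax T" and tax: "tests_ax T"
    and U: "U \<in> o_tr T X Y" and W: "W \<in> o_tr T Y X"
    and WU: "o_seq T W U = o_id T X" and UW: "o_seq T U W = o_id T Y"
    and pure: "pure_state T X \<psi>"
  shows "pure_state T Y (o_seq T U \<psi>)"
proof -
  let ?I = "o_triv T"
  have psi: "\<psi> \<in> o_tr T ?I X" and at: "\<And>D. refines T ?I X D \<psi> \<Longrightarrow> \<exists>c\<in>{0..1}. D = c *\<^sub>R \<psi>"
    using pure unfolding pure_state_def atomic_def by auto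
  have Upsi: "o_seq T U \<psi> \<in> o_tr T ?I Y" using cat_seq[OF cat U psi] .
  note assoc = cat_assoc[OF cat]
  have linW: "linear (o_seq T W)" and linU: "linear (o_seq T U)"
    using cat_lin[OF cat] by simp_all
  show ?thesis unfolding pure_state_def atomic_def
  proof (intro conjI allI impI Upsi)
    fix D assume "refines T ?I Y D (o_seq T U \<psi>)"
    then obtain ts Y0 where ts: "ts \<in> o_tests T ?I Y" and Y0: "Y0 \<subseteq> {..<length ts}"
      and sum: "o_seq T U \<psi> = (\<Sum>j\<in>Y0. ts ! j)" and D: "D \<in> (\<lambda>j. ts ! j) ` Y0"
      unfolding refines_def by blast
    obtain ws where ws: "ws \<in> o_tests T Y X" and Wws: "W \<in> set ws"
      using tst_ex[OF tax W] by blast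
    obtain k where k: "k < length ws" "ws ! k = W" using Wws by (meson in_set_conv_nth)
    define m where "m = length ws"
    define big where "big = concat (map (\<lambda>i. map (\<lambda>t. o_seq T t (ts ! i)) ws) [0..<length ts])"
    have big: "big \<in> o_tests T ?I X"
      unfolding big_def using tst_seq[OF tax ts, of "\<lambda>_. ws"] ws by simp
    define Y0' where "Y0' = (\<lambda>i. i * m + k) ` Y0"
    have lenb: "length big = length ts * m" unfolding big_def m_def by (rule concat_len)
    have Y0': "Y0' \<subseteq> {..<length big}"
      using Y0 k lenb idx_bound unfolding Y0'_def m_def by auto
    have inj: "inj_on (\<lambda>i. i * m + k) Y0"
      using k unfolding m_def by (intro inj_onI) auto
    have nth: "\<And>i. i \<in> Y0 \<Longrightarrow> big ! (i * m + k) = o_seq T W (ts ! i)"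
      using Y0 k unfolding big_def m_def by (auto simp: concat_nth_blocks)
    have "(\<Sum>j\<in>Y0'. big ! j) = (\<Sum>i\<in>Y0. big ! (i * m + k))"
      unfolding Y0'_def using inj by (simp add: sum.reindex)
    also have "\<dots> = (\<Sum>i\<in>Y0. o_seq T W (ts ! i))" using nth by simp
    also have "\<dots> = o_seq T W (\<Sum>i\<in>Y0. ts ! i)" using linW by (simp add: linear_sum)
    also have "\<dots> = \<psi>" unfolding sum[symmetric] assoc[symmetric] WU
      using cat_idl[OF cat psi] .
    finally have sumW: "\<psi> = (\<Sum>j\<in>Y0'. big ! j)" by simp
    obtain j0 where j0: "j0 \<in> Y0" "D = ts ! j0" using D by blast
    have "refines T ?I X (o_seq T W D) \<psi>"
      unfolding refines_def
    proof (rule bexI[OF _ big], rule exI[of _ Y0'], intro conjI)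
      show "Y0' \<subseteq> {..<length big}" by (rule Y0')
      show "\<psi> = (\<Sum>j\<in>Y0'. big ! j)" by (rule sumW)
      have "j0 * m + k \<in> Y0'" unfolding Y0'_def using j0 by blast
      moreover have "o_seq T W D = big ! (j0 * m + k)" using nth j0 by simp
      ultimately show "o_seq T W D \<in> (\<lambda>j. big ! j) ` Y0'" by blast
    qed
    then obtain c where c: "c \<in> {0..1}" "o_seq T W D = c *\<^sub>R \<psi>" using at by blast
    have Dtr: "D \<in> o_tr T ?I Y" proof -
      have "j0 < length ts" using j0 Y0 by blast
      then have "ts ! j0 \<in> set ts" by (rule nth_mem)
      then show ?thesis using tst_tr[OF tax ts] j0 by blast
    qed
    have "D = o_seq T (o_id T Y) D" using cat_idl[OF cat Dtr] by simp
    also have "\<dots> = o_seq T U (o_seq T W D)" unfolding UW[symmetric] assoc ..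
    also have "\<dots> = c *\<^sub>R o_seq T U \<psi>" using c linU by (simp add: linear_scale)
    finally show "\<exists>c\<in>{0..1}. D = c *\<^sub>R o_seq T U \<psi>" using c by blast
  qed
qed

theorem mainTheorem1:
  fixes T :: "('s, 't::real_normed_vector) opt" and A :: 's and \<psi> \<psi>' :: 't
  assumes "opt_framework T"
    and "purification_postulate T"
    and "normalized T A \<psi>" and "pure_state T A \<psi>"
    and "normalized T A \<psi>'" and "pure_state T A \<psi>'"
  shows "\<exists>U \<in> revG T A. \<psi>' = o_seq T U \<psi>"
proof -
  let ?I = "o_triv T"
  let ?e = "det_eff T"
  let ?s = "o_seq T"
  have sys: "systems_ax T" and cat: "category_ax T" and sw: "swap_ax T" and pr: "prob_ax T"
    and tax: "tests_ax T" and caus: "causality_ax T"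
    using assms(1) unfolding opt_framework_def by simp_all
  have AI: "o_cmp T A ?I = A" using sys unfolding systems_ax_def by simp
  note assoc = cat_assoc[OF cat]
  have euniq: "\<And>X. \<exists>!e. [e] \<in> o_tests T X ?I" using caus unfolding causality_ax_def by simp
  have etest: "\<And>X. [?e X] \<in> o_tests T X ?I"
    unfolding det_eff_def using euniq by (rule theI')
  have etr: "\<And>X. ?e X \<in> o_tr T X ?I" using etest tst_tr[OF tax] by fastforce
  have eI: "?e ?I = o_id T ?I"
    using euniq[of ?I] etest[of ?I] tst_id[OF tax, of ?I] by blast
  have idI: "o_id T ?I \<in> o_tr T ?I ?I" by (rule cat_id[OF cat])
  have probs1: "\<forall>ts \<in> o_tests T ?I ?I. (\<Sum>t\<leftarrow>ts. o_prob T t) = 1"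
    using pr unfolding prob_ax_def by simp
  have pid: "o_prob T (o_id T ?I) = 1" using bspec[OF probs1 tst_id[OF tax, of ?I]] by simp
  have parp: "\<forall>X Y C. \<forall>p \<in> o_tr T ?I ?I. C \<in> o_tr T X Y \<longrightarrow> o_par T C p = o_prob T p *\<^sub>R C"
    using pr unfolding prob_ax_def by simp
  have parid: "\<And>X Y C. C \<in> o_tr T X Y \<Longrightarrow> o_par T C (o_id T ?I) = C"
    using parp idI pid by simp
  have pinj: "inj_on (o_prob T) (o_tr T ?I ?I)" using pr unfolding prob_ax_def by simp
  have nat: "\<And>X X' Y Y' C D. C \<in> o_tr T X Y \<Longrightarrow> D \<in> o_tr T X' Y' \<Longrightarrow>
        ?s (o_swap T Y Y') (o_par T C D) = ?s (o_par T D C) (o_swap T X X')"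
    using sw unfolding swap_ax_def by blast
  have rev: "reversible T A (o_cmp T ?I A) (o_swap T A ?I)"
    using sw AI unfolding swap_ax_def by metis
  then obtain W where Sch: "channel T A (o_cmp T ?I A) (o_swap T A ?I)"
    and Wch: "channel T (o_cmp T ?I A) A W"
    and WS: "?s W (o_swap T A ?I) = o_id T A" and SW: "?s (o_swap T A ?I) W = o_id T (o_cmp T ?I A)"
    unfolding reversible_def by blast
  have Str: "o_swap T A ?I \<in> o_tr T A (o_cmp T ?I A)"
    and Se: "?s (?e (o_cmp T ?I A)) (o_swap T A ?I) = ?e A"
    using Sch unfolding channel_def by auto
  have Wtr: "W \<in> o_tr T (o_cmp T ?I A) A" using Wch unfolding channel_def by simp
  have psi: "\<psi> \<in> o_tr T ?I A" and psi': "\<psi>' \<in> o_tr T ?I A"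
    and n1: "o_prob T (?s (?e A) \<psi>) = 1" and n2: "o_prob T (?s (?e A) \<psi>') = 1"
    using assms(3,5) unfolding normalized_def states_def pairing_def by auto
  have eq_e: "?s (?e A) \<psi> = ?s (?e A) \<psi>'"
    using pinj n1 n2 cat_seq[OF cat etr psi] cat_seq[OF cat etr psi'] unfolding inj_on_def by simp
  define \<Psi> where "\<Psi> = ?s (o_swap T A ?I) \<psi>"
  define \<Psi>' where "\<Psi>' = ?s (o_swap T A ?I) \<psi>'"
  have marg: "\<And>\<phi>. \<phi> \<in> o_tr T ?I A \<Longrightarrow>
      marginal T ?I A (?s (o_swap T A ?I) \<phi>) = ?s (o_swap T ?I ?I) (?s (?e A) \<phi>)"
  proof -
    fix \<phi>
    have "?s (o_swap T ?I ?I) (o_par T (?e A) (o_id T ?I)) = ?s (o_par T (o_id T ?I) (?e A)) (o_swap T A ?I)"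
      using nat[OF etr[of A] idI] .
    then have "?s (o_par T (o_id T ?I) (?e A)) (o_swap T A ?I) = ?s (o_swap T ?I ?I) (?e A)"
      using parid[OF etr[of A]] by simp
    then show "marginal T ?I A (?s (o_swap T A ?I) \<phi>) = ?s (o_swap T ?I ?I) (?s (?e A) \<phi>)"
      unfolding marginal_def assoc[symmetric] by simp
  qed
  have purif: "\<And>\<phi>. normalized T A \<phi> \<Longrightarrow> pure_state T A \<phi> \<Longrightarrow>
       purification T ?I A (?s (o_swap T ?I ?I) (?s (?e A) \<phi>)) (?s (o_swap T A ?I) \<phi>)"
  proof -
    fix \<phi> assume nphi: "normalized T A \<phi>" and pphi: "pure_state T A \<phi>"
    have phi: "\<phi> \<in> o_tr T ?I A" and np: "o_prob T (?s (?e A) \<phi>) = 1"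
      using nphi unfolding normalized_def states_def pairing_def by auto
    have "normalized T (o_cmp T ?I A) (?s (o_swap T A ?I) \<phi>)"
      unfolding normalized_def states_def pairing_def
      using cat_seq[OF cat Str phi] np Se assoc[symmetric] by metis
    moreover have "pure_state T (o_cmp T ?I A) (?s (o_swap T A ?I) \<phi>)"
      by (rule pure_transport[OF cat tax Str Wtr WS SW pphi])
    ultimately show "purification T ?I A (?s (o_swap T ?I ?I) (?s (?e A) \<phi>)) (?s (o_swap T A ?I) \<phi>)"
      unfolding purification_def using marg[OF phi] by simp
  qed
  have P1: "purification T ?I A (?s (o_swap T ?I ?I) (?s (?e A) \<psi>)) \<Psi>"
    unfolding \<Psi>_def using purif assms(3,4) .
  have P2: "purification T ?I A (?s (o_swap T ?I ?I) (?s (?e A) \<psi>)) \<Psi>'"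
    unfolding \<Psi>'_def eq_e using purif assms(5,6) .
  obtain V where V: "V \<in> revG T A" and VV: "\<Psi>' = ?s (o_par T (o_id T ?I) V) \<Psi>"
    using assms(2) P1 P2 unfolding purification_postulate_def by blast
  have Vtr: "V \<in> o_tr T A A" using V unfolding revG_def reversible_def channel_def by blast
  have comm: "?s (o_par T (o_id T ?I) V) (o_swap T A ?I) = ?s (o_swap T A ?I) V"
    using nat[OF Vtr idI] parid[OF Vtr] AI by simp
  have Vpsi: "?s V \<psi> \<in> o_tr T ?I A" using cat_seq[OF cat Vtr psi] .
  have "\<psi>' = ?s (o_id T A) \<psi>'" using cat_idl[OF cat psi'] by simp
  also have "\<dots> = ?s W \<Psi>'" unfolding WS[symmetric] \<Psi>'_def assoc ..
  also have "\<dots> = ?s W (?s (o_swap T A ?I) (?s V \<psi>))"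
    unfolding VV \<Psi>_def assoc[symmetric] comm ..
  also have "\<dots> = ?s V \<psi>" unfolding assoc[symmetric] WS using cat_idl[OF cat Vpsi] by (simp add: assoc)
  finally show ?thesis using V by blast
qed

end
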